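(* Let $(Z, S(1), S(0), Y(1), Y(0), \mathbf{X})$ be random variables with $Z\in\{0,1\}$, $S(z)\in\{0,1\}$, $Y(z)$ real-valued, $\mathbf{X}$ a covariate vector, observed $S=S(Z)$, $Y=Y(Z)$, and assume Randomization: $Z \perp\!\!\!\perp \{S(1),S(0),Y(1),Y(0),\mathbf{X}\}$. Assume Monotonicity, i.e. $S(1)\ge S(0)$ almost surely. Suppose there are constants $\varepsilon_1,\varepsilon_0$ (not depending on $\mathbf{X}$) such that $$\varepsilon_1 = \frac{E\{Y(1)\mid U=s\bar{s},\mathbf{X}\}}{E\{Y(1)\mid U=ss,\mathbf{X}\}},\qquad \varepsilon_0 = \frac{E\{Y(0)\mid U=s\bar{s},\mathbf{X}\}}{E\{Y(0)\mid U=\bar{s}\bar{s},\mathbf{X}\}}.$$ Then $$ACE_{s\bar{s}} = E\{w^{\varepsilon_1}_{1,s\bar{s}}(\mathbf{X})Y\mid Z=1,S=1\} - E\{w^{\varepsilon_0}_{0,s\bar{s}}(\mathbf{X})Y\mid Z=0,S=0\},$$ $$ACE_{\bar{s}\bar{s}} = E(Y\mid Z=1,S=0) - E\{w^{\varepsilon_0}_{0,\bar{s}\bar{s}}(\mathbf{X})Y\mid Z=0,S=0\},$$ $$ACE_{ss} = E\{w^{\varepsilon_1}_{1,ss}(\mathbf{X})Y\mid Z=1,S=1\} - E(Y\mid Z=0,S=1),$$ where $w^{\varepsilon_1}_{1,s\bar{s}}(\mathbf{X}) = \frac{\varepsilon_1 e_{s\bar{s}}(\mathbf{X})}{\varepsilon_1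 e_{s\bar{s}}(\mathbf{X})+e_{ss}(\mathbf{X})}\Big/\frac{\pi_{s\bar{s}}}{\pi_{s\bar{s}}+\pi_{ss}}$, $w^{\varepsilon_0}_{0,s\bar{s}}(\mathbf{X}) = \frac{\varepsilon_0 e_{s\bar{s}}(\mathbf{X})}{\varepsilon_0 e_{s\bar{s}}(\mathbf{X})+e_{\bar{s}\bar{s}}(\mathbf{X})}\Big/\frac{\pi_{s\bar{s}}}{\pi_{s\bar{s}}+\pi_{\bar{s}\bar{s}}}$, $w^{\varepsilon_0}_{0,\bar{s}\bar{s}}(\mathbf{X}) = \frac{e_{\bar{s}\bar{s}}(\mathbf{X})}{\varepsilon_0 e_{s\bar{s}}(\mathbf{X})+e_{\bar{s}\bar{s}}(\mathbf{X})}\Big/\frac{\pi_{\bar{s}\bar{s}}}{\pi_{s\bar{s}}+\pi_{\bar{s}\bar{s}}}$, $w^{\varepsilon_1}_{1,ss}(\mathbf{X}) = \frac{e_{ss}(\mathbf{X})}{\varepsilon_1 e_{s\bar{s}}(\mathbf{X})+e_{ss}(\mathbf{X})}\Big/\frac{\pi_{ss}}{\pi_{s\bar{s}}+\pi_{ss}}$.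
   Context: The principal stratum is $U=(S(1),S(0))$, whose values $(1,1),(1,0),(0,1),(0,0)$ are labelled $ss, s\bar{s}, \bar{s}s, \bar{s}\bar{s}$. Principal scores: $e_u(\mathbf{X}) = \Pr(U=u\mid \mathbf{X})$; proportions $\pi_u=\Pr(U=u)$. Principal causal effects: $ACE_u = E\{Y(1)-Y(0)\mid U=u\}$. All expectations are assumed to exist and all conditioning events and denominators to be positive. *)

theory Defs
  imports "HOL-Probability.Probability"
begin

text \<open>Treatment Z and intermediate potential
outcomes S(1), S(0) are Boolean (True = 1, False = 0); Y(1), Y(0) are real;
the covariate X takes values in an arbitrary measurable space N.\<close>

definition obsS :: "('a \<Rightarrow> bool) \<Rightarrow> ('a \<Rightarrow> bool) \<Rightarrow> ('a \<Rightarrow> bool) \<Rightarrow> 'a \<Rightarrow> bool" where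
  "obsS Z S1 S0 \<omega> = (if Z \<omega> then S1 \<omega> else S0 \<omega>)"

definition obsY :: "('a \<Rightarrow> bool) \<Rightarrow> ('a \<Rightarrow> real) \<Rightarrow> ('a \<Rightarrow> real) \<Rightarrow> 'a \<Rightarrow> real" where
  "obsY Z Y1 Y0 \<omega> = (if Z \<omega> then Y1 \<omega> else Y0 \<omega>)"

definition stratum :: "'a measure \<Rightarrow> ('a \<Rightarrow> bool) \<Rightarrow> ('a \<Rightarrow> bool) \<Rightarrow> bool \<Rightarrow> bool \<Rightarrow> 'a set" where
  "stratum M S1 S0 a b = {\<omega> \<in> space M. S1 \<omega> = a \<and> S0 \<omega> = b}"

definition cexp_ev :: "'a measure \<Rightarrow> ('a \<Rightarrow> real) \<Rightarrow> 'a set \<Rightarrow> real" where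
  "cexp_ev M Y A = (\<integral>\<omega>. Y \<omega> * indicator A \<omega> \<partial>M) / measure M A"

definition sigX :: "'a measure \<Rightarrow> 'x measure \<Rightarrow> ('a \<Rightarrow> 'x) \<Rightarrow> 'a measure" where
  "sigX M N X = vimage_algebra (space M) X N"

definition pscore :: "'a measure \<Rightarrow> 'x measure \<Rightarrow> ('a \<Rightarrow> 'x) \<Rightarrow> 'a set \<Rightarrow> 'a \<Rightarrow> real" where
  "pscore M N X A = real_cond_exp M (sigX M N X) (indicator A)"

definition condE :: "'a measure \<Rightarrow> 'x measure \<Rightarrow> ('a \<Rightarrow> 'x) \<Rightarrow> ('a \<Rightarrow> real) \<Rightarrow> 'a set \<Rightarrow> 'a \<Rightarrow> real" where
  "condE M N X Y A \<omega> =
     real_cond_exp M (sigX M N X) (\<lambda>\<omega>. Y \<omega> * indicator A \<omega>) \<omega> / pscore M N X A \<omega>"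


definition escore :: "'a measure \<Rightarrow> 'x measure \<Rightarrow> ('a \<Rightarrow> 'x) \<Rightarrow> ('a \<Rightarrow> bool) \<Rightarrow> ('a \<Rightarrow> bool) \<Rightarrow> bool \<Rightarrow> bool \<Rightarrow> 'a \<Rightarrow> real" where
  "escore M N X S1 S0 a b = pscore M N X (stratum M S1 S0 a b)"

definition sprop :: "'a measure \<Rightarrow> ('a \<Rightarrow> bool) \<Rightarrow> ('a \<Rightarrow> bool) \<Rightarrow> bool \<Rightarrow> bool \<Rightarrow> real" where
  "sprop M S1 S0 a b = measure M (stratum M S1 S0 a b)"

text \<open>The four weights of the proposition (ss = (T,T), s sbar = (T,F), sbar sbar = (F,F)).\<close>
definition w1_ssbar where
  "w1_ssbar M N X S1 S0 (\<epsilon>1::real) \<omega> =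
     (\<epsilon>1 * escore M N X S1 S0 True False \<omega> /
        (\<epsilon>1 * escore M N X S1 S0 True False \<omega> + escore M N X S1 S0 True True \<omega>))
     / (sprop M S1 S0 True False / (sprop M S1 S0 True False + sprop M S1 S0 True True))"

definition w0_ssbar where
  "w0_ssbar M N X S1 S0 (\<epsilon>0::real) \<omega> =
     (\<epsilon>0 * escore M N X S1 S0 True False \<omega> /
        (\<epsilon>0 * escore M N X S1 S0 True False \<omega> + escore M N X S1 S0 False False \<omega>))
     / (sprop M S1 S0 True False / (sprop M S1 S0 True False + sprop M S1 S0 False False))"

definition w0_sbarsbar where
  "w0_sbarsbar M N X S1 S0 (\<epsilon>0::real) \<omega> =
     (escore M N X S1 S0 False False \<omega> /
        (\<epsilon>0 * escore M N X S1 S0 True False \<omega> + escore M N X S1 S0 False False \<omega>))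
     / (sprop M S1 S0 False False / (sprop M S1 S0 True False + sprop M S1 S0 False False))"

definition w1_ss where
  "w1_ss M N X S1 S0 (\<epsilon>1::real) \<omega> =
     (escore M N X S1 S0 True True \<omega> /
        (\<epsilon>1 * escore M N X S1 S0 True False \<omega> + escore M N X S1 S0 True True \<omega>))
     / (sprop M S1 S0 True True / (sprop M S1 S0 True False + sprop M S1 S0 True True))"

end

theory Submission
  imports Defs
begin

context sigma_finite_subalgebra
begin

lemma weight_core:
  fixes Y :: "'a \<Rightarrow> real" and A B :: "'a set" and \<epsilon> k :: real
  assumes intY: "integrable M Y" and A[measurable]: "A \<in> sets M" and B[measurable]: "B \<in> sets M"
    and disj: "A \<inter> B = {}"
    and eps: "AE \<omega> in M. \<epsilon> = (real_cond_exp M F (\<lambda>\<omega>. Y \<omega> * indicator A \<omega>) \<omega> / real_cond_exp M F (indicator A) \<omega>)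
                  / (real_cond_exp M F (\<lambda>\<omega>. Y \<omega> * indicator B \<omega>) \<omega> / real_cond_exp M F (indicator B) \<omega>)"
    and posA: "AE \<omega> in M. real_cond_exp M F (indicator A) \<omega> > 0"
    and posB: "AE \<omega> in M. real_cond_exp M F (indicator B) \<omega> > 0"
    and nz: "AE \<omega> in M. real_cond_exp M F (\<lambda>\<omega>. Y \<omega> * indicator B \<omega>) \<omega> / real_cond_exp M F (indicator B) \<omega> \<noteq> 0"
    and den: "AE \<omega> in M. \<epsilon> * real_cond_exp M F (indicator A) \<omega> + real_cond_exp M F (indicator B) \<omega> > 0"
    and g: "(g = (\<lambda>\<omega>. \<epsilon> * real_cond_exp M F (indicator A) \<omega>) \<and> C = A) \<or> (g = real_cond_exp M F (indicator B) \<and> C = B)"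
    and int: "integrable M (\<lambda>\<omega>. ((g \<omega> / (\<epsilon> * real_cond_exp M F (indicator A) \<omega> + real_cond_exp M F (indicator B) \<omega>)) / k)
                  * (Y \<omega> * indicator (A \<union> B) \<omega>))"
  shows "(\<integral>\<omega>. ((g \<omega> / (\<epsilon> * real_cond_exp M F (indicator A) \<omega> + real_cond_exp M F (indicator B) \<omega>)) / k)
                  * (Y \<omega> * indicator (A \<union> B) \<omega>) \<partial>M) = (\<integral>\<omega>. Y \<omega> * indicator C \<omega> \<partial>M) / k"
proof -
  define eA where "eA = real_cond_exp M F (indicator A)"
  define eB where "eB = real_cond_exp M F (indicator B)"
  define cA where "cA = real_cond_exp M F (\<lambda>\<omega>. Y \<omega> * indicator A \<omega>)"
  define cB where "cB = real_cond_exp M F (\<lambda>\<omega>. Y \<omega> * indicator B \<omega>)"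
  have [measurable]: "Y \<in> borel_measurable M" using intY by auto
  have mF[measurable]: "eA \<in> borel_measurable F" "eB \<in> borel_measurable F" "cA \<in> borel_measurable F" "cB \<in> borel_measurable F"
    unfolding eA_def eB_def cA_def cB_def by auto
  have mM[measurable]: "eA \<in> borel_measurable M" "eB \<in> borel_measurable M" "cA \<in> borel_measurable M" "cB \<in> borel_measurable M"
    using mF by (auto intro: measurable_from_subalg[OF subalg])
  have gF[measurable]: "g \<in> borel_measurable F" using g unfolding eA_def by auto
  define w where "w = (\<lambda>\<omega>. (g \<omega> / (\<epsilon> * eA \<omega> + eB \<omega>)) / k)"
  have wF[measurable]: "w \<in> borel_measurable F" unfolding w_def by measurable
  have wM[measurable]: "w \<in> borel_measurable M" using wF by (auto intro: measurable_from_subalg[OF subalg])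
  have intA: "integrable M (\<lambda>\<omega>. Y \<omega> * indicator A \<omega>)"
    using integrable_mult_indicator[OF A intY] by (simp add: mult.commute)
  have intB: "integrable M (\<lambda>\<omega>. Y \<omega> * indicator B \<omega>)"
    using integrable_mult_indicator[OF B intY] by (simp add: mult.commute)
  have intw: "integrable M (\<lambda>\<omega>. w \<omega> * (Y \<omega> * indicator (A \<union> B) \<omega>))"
    using int unfolding w_def eA_def eB_def .
  have step1: "(\<integral>\<omega>. w \<omega> * (Y \<omega> * indicator (A \<union> B) \<omega>) \<partial>M)
      = (\<integral>\<omega>. w \<omega> * real_cond_exp M F (\<lambda>\<omega>. Y \<omega> * indicator (A \<union> B) \<omega>) \<omega> \<partial>M)"
    by (rule real_cond_exp_intg(2)[symmetric]) (use intw in auto)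
  have split: "(\<lambda>\<omega>. Y \<omega> * indicator (A \<union> B) \<omega>) = (\<lambda>\<omega>. Y \<omega> * indicator A \<omega> + Y \<omega> * indicator B \<omega>)"
    using disj by (auto simp: indicator_def fun_eq_iff)
  have add: "AE \<omega> in M. real_cond_exp M F (\<lambda>\<omega>. Y \<omega> * indicator (A \<union> B) \<omega>) \<omega> = cA \<omega> + cB \<omega>"
    unfolding split cA_def cB_def by (rule real_cond_exp_add[OF intA intB])
  have C: "C = A \<or> C = B" using g by auto
  define cC where "cC = real_cond_exp M F (\<lambda>\<omega>. Y \<omega> * indicator C \<omega>)"
  have intC: "integrable M (\<lambda>\<omega>. Y \<omega> * indicator C \<omega>)" using C intA intB by auto
  have cCM[measurable]: "cC \<in> borel_measurable M" using C mM unfolding cC_def cA_def cB_def by auto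
  have alg: "AE \<omega> in M. w \<omega> * (cA \<omega> + cB \<omega>) = cC \<omega> / k"
    using eps posA posB nz den
  proof eventually_elim
    case (elim \<omega>)
    have e1: "eA \<omega> > 0" "eB \<omega> > 0" "\<epsilon> * eA \<omega> + eB \<omega> > 0" using elim unfolding eA_def eB_def by auto
    have cB0: "cB \<omega> \<noteq> 0" using elim unfolding cB_def eB_def by auto
    have rel: "\<epsilon> * eA \<omega> * cB \<omega> = cA \<omega> * eB \<omega>"
      using elim(1) e1 cB0 unfolding eA_def eB_def cA_def cB_def by (simp add: field_simps)
    show ?case
    proof (cases "g = (\<lambda>\<omega>. \<epsilon> * real_cond_exp M F (indicator A) \<omega>) \<and> C = A")
      case True
      then have "g \<omega> = \<epsilon> * eA \<omega>" "cC = cA" unfolding eA_def cC_def cA_def by auto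
      then have key: "g \<omega> * (cA \<omega> + cB \<omega>) = cC \<omega> * (\<epsilon> * eA \<omega> + eB \<omega>)"
        using rel by (simp add: algebra_simps)
      have "w \<omega> * (cA \<omega> + cB \<omega>) = (g \<omega> * (cA \<omega> + cB \<omega>)) / (\<epsilon> * eA \<omega> + eB \<omega>) / k"
        unfolding w_def by simp
      also have "\<dots> = cC \<omega> / k" unfolding key using e1(3) by simp
      finally show ?thesis .
    next
      case False
      then have "g \<omega> = eB \<omega>" "cC = cB" using g unfolding eB_def cC_def cB_def by auto
      then have key: "g \<omega> * (cA \<omega> + cB \<omega>) = cC \<omega> * (\<epsilon> * eA \<omega> + eB \<omega>)"
        using rel by (simp add: algebra_simps)
      have "w \<omega> * (cA \<omega> + cB \<omega>) = (g \<omega> * (cA \<omega> + cB \<omega>)) / (\<epsilon> * eA \<omega> + eB \<omega>) / k"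
        unfolding w_def by simp
      also have "\<dots> = cC \<omega> / k" unfolding key using e1(3) by simp
      finally show ?thesis .
    qed
  qed
  have "(\<integral>\<omega>. w \<omega> * real_cond_exp M F (\<lambda>\<omega>. Y \<omega> * indicator (A \<union> B) \<omega>) \<omega> \<partial>M)
      = (\<integral>\<omega>. cC \<omega> / k \<partial>M)"
    using add alg by (intro integral_cong_AE) auto
  also have "\<dots> = (\<integral>\<omega>. cC \<omega> \<partial>M) / k" by simp
  also have "\<dots> = (\<integral>\<omega>. Y \<omega> * indicator C \<omega> \<partial>M) / k"
    unfolding cC_def using real_cond_exp_int(2)[OF intC] by simp
  finally show ?thesis using step1 unfolding w_def eA_def eB_def by simp
qed
end

lemma (in prob_space) indep_int:
  fixes f :: "'a \<Rightarrow> real"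
  assumes ind: "indep_set A B"
    and EA: "\<And>C. (indicator E :: 'a \<Rightarrow> real) -` C \<inter> space M \<in> A"
    and fB: "\<And>C. C \<in> sets borel \<Longrightarrow> f -` C \<inter> space M \<in> B"
    and E[measurable]: "E \<in> events" and fm[measurable]: "f \<in> borel_measurable M"
    and int: "integrable M (\<lambda>\<omega>. f \<omega> * indicator E \<omega>)"
    and pos: "prob E > 0"
  shows "integrable M f" "(\<integral>\<omega>. f \<omega> * indicator E \<omega> \<partial>M) = prob E * (\<integral>\<omega>. f \<omega> \<partial>M)"
proof -
  have iv: "indep_var borel (indicator E :: 'a \<Rightarrow> real) borel f"
    unfolding indep_var_def indep_vars_def2
  proof (intro conjI ballI)
    fix i :: bool show "random_variable (case_bool borel borel i) (case_bool (indicator E) f i)"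
      by (cases i) auto
  next
    show "indep_sets (\<lambda>i. {case_bool (indicator E) f i -` A \<inter> space M |A. A \<in> sets (case_bool borel borel i)}) UNIV"
      using ind[unfolded indep_set_def]
    proof (rule indep_sets_mono_sets)
      fix i :: bool assume "i \<in> UNIV"
      show "{case_bool (indicator E) f i -` A \<inter> space M |A. A \<in> sets (case_bool borel borel i)} \<subseteq> case_bool A B i"
        using EA fB by (cases i) auto
    qed
  qed
  have iv2: "indep_var borel ((\<lambda>x. ennreal x) \<circ> (indicator E :: 'a \<Rightarrow> real)) borel ((\<lambda>x. ennreal \<bar>x\<bar>) \<circ> f)"
    by (rule indep_var_compose[OF iv]) auto
  have iv3: "indep_vars (\<lambda>_. borel) (case_bool ((\<lambda>x. ennreal x) \<circ> (indicator E :: 'a \<Rightarrow> real)) ((\<lambda>x. ennreal \<bar>x\<bar>) \<circ> f)) UNIV"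
  proof -
    have "(\<lambda>_::bool. borel :: ennreal measure) = case_bool borel borel"
      by (rule ext) (simp split: bool.split)
    then show ?thesis using iv2 unfolding indep_var_def by simp
  qed
  have nn: "(\<integral>\<^sup>+\<omega>. ennreal (indicator E \<omega>) * ennreal \<bar>f \<omega>\<bar> \<partial>M)
      = (\<integral>\<^sup>+\<omega>. ennreal (indicator E \<omega>) \<partial>M) * (\<integral>\<^sup>+\<omega>. ennreal \<bar>f \<omega>\<bar> \<partial>M)"
    using indep_vars_nn_integral[OF _ iv3] by (simp add: UNIV_bool mult.commute comp_def)
  have "(\<integral>\<^sup>+\<omega>. ennreal (indicator E \<omega>) * ennreal \<bar>f \<omega>\<bar> \<partial>M) = (\<integral>\<^sup>+\<omega>. ennreal (norm (f \<omega> * indicator E \<omega>)) \<partial>M)"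
    by (intro nn_integral_cong) (auto simp: indicator_def)
  also have "\<dots> < \<infinity>" using int by (simp add: integrable_iff_bounded)
  finally have fin: "(\<integral>\<^sup>+\<omega>. ennreal (indicator E \<omega>) \<partial>M) * (\<integral>\<^sup>+\<omega>. ennreal \<bar>f \<omega>\<bar> \<partial>M) < \<infinity>"
    using nn by simp
  have "(\<integral>\<^sup>+\<omega>. ennreal (indicator E \<omega>) \<partial>M) = emeasure M E" using nn_integral_indicator[OF E] by (simp add: ennreal_indicator)
  also have "\<dots> = ennreal (prob E)" by (simp add: emeasure_eq_measure)
  finally have eqE: "(\<integral>\<^sup>+\<omega>. ennreal (indicator E \<omega>) \<partial>M) = ennreal (prob E)" .
  have "(\<integral>\<^sup>+\<omega>. ennreal \<bar>f \<omega>\<bar> \<partial>M) < \<infinity>"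
    using fin pos unfolding eqE by (auto simp: ennreal_mult_less_top)
  then show intf: "integrable M f" by (intro integrableI_bounded) auto
  have "(\<integral>\<omega>. indicator E \<omega> * f \<omega> \<partial>M) = (\<integral>\<omega>. indicator E \<omega> \<partial>M) * (\<integral>\<omega>. f \<omega> \<partial>M)"
    by (rule indep_var_lebesgue_integral[OF iv _ intf]) (simp add: integrable_indicator_iff emeasure_eq_measure)
  then show "(\<integral>\<omega>. f \<omega> * indicator E \<omega> \<partial>M) = prob E * (\<integral>\<omega>. f \<omega> \<partial>M)"
    by (simp add: mult.commute)
qed


lemma (in prob_space) obs_ratio:
  fixes f :: "'a \<Rightarrow> real"
  assumes ind: "indep_set A B"
    and EA: "\<And>C. (indicator E :: 'a \<Rightarrow> real) -` C \<inter> space M \<in> A"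
    and fB: "\<And>C. C \<in> sets borel \<Longrightarrow> f -` C \<inter> space M \<in> B"
    and E[measurable]: "E \<in> events" and fm[measurable]: "f \<in> borel_measurable M"
    and int: "integrable M (\<lambda>\<omega>. f \<omega> * indicator E \<omega>)"
    and S: "S \<in> B"
    and pos: "prob (E \<inter> S) > 0"
  shows "integrable M f" "(\<integral>\<omega>. f \<omega> * indicator E \<omega> \<partial>M) / prob (E \<inter> S) = (\<integral>\<omega>. f \<omega> \<partial>M) / prob S"
proof -
  have "E = (indicator E :: 'a \<Rightarrow> real) -` {1} \<inter> space M"
    using sets.sets_into_space[OF E] by (auto simp: indicator_def)
  then have EinA: "E \<in> A" using EA by metis
  have pr: "prob (E \<inter> S) = prob E * prob S" by (rule indep_setD[OF ind EinA S])
  have pE: "prob E > 0" "prob S > 0" using pos unfolding pr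
    by (auto simp: zero_less_mult_iff measure_nonneg dest: order.strict_trans2[OF _ measure_nonneg])
  show "integrable M f" by (rule indep_int[OF ind EA fB E fm int pE(1)])
  have "(\<integral>\<omega>. f \<omega> * indicator E \<omega> \<partial>M) = prob E * (\<integral>\<omega>. f \<omega> \<partial>M)"
    by (rule indep_int[OF ind EA fB E fm int pE(1)])
  then show "(\<integral>\<omega>. f \<omega> * indicator E \<omega> \<partial>M) / prob (E \<inter> S) = (\<integral>\<omega>. f \<omega> \<partial>M) / prob S"
    unfolding pr using pE by simp
qed


lemma kdiv: "(c::real) > 0 \<Longrightarrow> s > 0 \<Longrightarrow> I / (c / s) / s = I / c"
  by (simp add: field_simps)

theorem proposition4:
  fixes M :: "'a measure" and N :: "'x measure"
    and Z S1 S0 :: "'a \<Rightarrow> bool" and Y1 Y0 :: "'a \<Rightarrow> real" and X :: "'a \<Rightarrow> 'x"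
    and \<epsilon>1 \<epsilon>0 :: real
  assumes P: "prob_space M"
    and mZ: "Z \<in> M \<rightarrow>\<^sub>M count_space UNIV"
    and mS1: "S1 \<in> M \<rightarrow>\<^sub>M count_space UNIV"
    and mS0: "S0 \<in> M \<rightarrow>\<^sub>M count_space UNIV"
    and mY1: "Y1 \<in> borel_measurable M"
    and mY0: "Y0 \<in> borel_measurable M"
    and mX: "X \<in> M \<rightarrow>\<^sub>M N"
    and randomization: "prob_space.indep_set M
           {Z -` A \<inter> space M | A. A \<in> sets (count_space UNIV)}
           {(\<lambda>\<omega>. (S1 \<omega>, S0 \<omega>, Y1 \<omega>, Y0 \<omega>, X \<omega>)) -` B \<inter> space M | B.
              B \<in> sets (count_space UNIV \<Otimes>\<^sub>M count_space UNIV \<Otimes>\<^sub>M borel \<Otimes>\<^sub>M borel \<Otimes>\<^sub>M N)}"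
    and monotonicity: "AE \<omega> in M. S0 \<omega> \<longrightarrow> S1 \<omega>"
    and eps1: "AE \<omega> in M. \<epsilon>1 = condE M N X Y1 (stratum M S1 S0 True False) \<omega>
                                / condE M N X Y1 (stratum M S1 S0 True True) \<omega>"
    and eps0: "AE \<omega> in M. \<epsilon>0 = condE M N X Y0 (stratum M S1 S0 True False) \<omega>
                                / condE M N X Y0 (stratum M S1 S0 False False) \<omega>"
    and int_Y1: "integrable M Y1"
    and int_Y0: "integrable M Y0"
    and int_w1sn: "integrable M (\<lambda>\<omega>. w1_ssbar M N X S1 S0 \<epsilon>1 \<omega> * obsY Z Y1 Y0 \<omega>)"
    and int_w0sn: "integrable M (\<lambda>\<omega>. w0_ssbar M N X S1 S0 \<epsilon>0 \<omega> * obsY Z Y1 Y0 \<omega>)"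
    and int_w0nn: "integrable M (\<lambda>\<omega>. w0_sbarsbar M N X S1 S0 \<epsilon>0 \<omega> * obsY Z Y1 Y0 \<omega>)"
    and int_w1ss: "integrable M (\<lambda>\<omega>. w1_ss M N X S1 S0 \<epsilon>1 \<omega> * obsY Z Y1 Y0 \<omega>)"
    and pos_ess: "AE \<omega> in M. escore M N X S1 S0 True True \<omega> > 0"
    and pos_esn: "AE \<omega> in M. escore M N X S1 S0 True False \<omega> > 0"
    and pos_enn: "AE \<omega> in M. escore M N X S1 S0 False False \<omega> > 0"
    and nz_den1: "AE \<omega> in M. condE M N X Y1 (stratum M S1 S0 True True) \<omega> \<noteq> 0"
    and nz_den0: "AE \<omega> in M. condE M N X Y0 (stratum M S1 S0 False False) \<omega> \<noteq> 0"
    and pos_wden1: "AE \<omega> in M. \<epsilon>1 * escore M N X S1 S0 True False \<omega> + escore M N X S1 S0 True True \<omega> > 0"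
    and pos_wden0: "AE \<omega> in M. \<epsilon>0 * escore M N X S1 S0 True False \<omega> + escore M N X S1 S0 False False \<omega> > 0"
    and pos_pi: "sprop M S1 S0 True True > 0" "sprop M S1 S0 True False > 0" "sprop M S1 S0 False False > 0"
    and pos_E11: "measure M {\<omega> \<in> space M. Z \<omega> \<and> obsS Z S1 S0 \<omega>} > 0"
    and pos_E10: "measure M {\<omega> \<in> space M. Z \<omega> \<and> \<not> obsS Z S1 S0 \<omega>} > 0"
    and pos_E01: "measure M {\<omega> \<in> space M. \<not> Z \<omega> \<and> obsS Z S1 S0 \<omega>} > 0"
    and pos_E00: "measure M {\<omega> \<in> space M. \<not> Z \<omega> \<and> \<not> obsS Z S1 S0 \<omega>} > 0"
  shows "(cexp_ev M (\<lambda>\<omega>. Y1 \<omega> - Y0 \<omega>) (stratum M S1 S0 True False) =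
           cexp_ev M (\<lambda>\<omega>. w1_ssbar M N X S1 S0 \<epsilon>1 \<omega> * obsY Z Y1 Y0 \<omega>)
                     {\<omega> \<in> space M. Z \<omega> \<and> obsS Z S1 S0 \<omega>}
         - cexp_ev M (\<lambda>\<omega>. w0_ssbar M N X S1 S0 \<epsilon>0 \<omega> * obsY Z Y1 Y0 \<omega>)
                     {\<omega> \<in> space M. \<not> Z \<omega> \<and> \<not> obsS Z S1 S0 \<omega>}) \<and>
         (cexp_ev M (\<lambda>\<omega>. Y1 \<omega> - Y0 \<omega>) (stratum M S1 S0 False False) =
           cexp_ev M (obsY Z Y1 Y0) {\<omega> \<in> space M. Z \<omega> \<and> \<not> obsS Z S1 S0 \<omega>}
         - cexp_ev M (\<lambda>\<omega>. w0_sbarsbar M N X S1 S0 \<epsilon>0 \<omega> * obsY Z Y1 Y0 \<omega>)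
                     {\<omega> \<in> space M. \<not> Z \<omega> \<and> \<not> obsS Z S1 S0 \<omega>}) \<and>
         (cexp_ev M (\<lambda>\<omega>. Y1 \<omega> - Y0 \<omega>) (stratum M S1 S0 True True) =
           cexp_ev M (\<lambda>\<omega>. w1_ss M N X S1 S0 \<epsilon>1 \<omega> * obsY Z Y1 Y0 \<omega>)
                     {\<omega> \<in> space M. Z \<omega> \<and> obsS Z S1 S0 \<omega>}
         - cexp_ev M (obsY Z Y1 Y0) {\<omega> \<in> space M. \<not> Z \<omega> \<and> obsS Z S1 S0 \<omega>})"
proof -
  interpret prob_space M by (rule P)
  define F where "F = sigX M N X"
  let ?sTT = "stratum M S1 S0 True True"
  let ?sTF = "stratum M S1 S0 True False"
  let ?sFT = "stratum M S1 S0 False True"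
  let ?sFF = "stratum M S1 S0 False False"
  let ?V = "\<lambda>\<omega>. (S1 \<omega>, S0 \<omega>, Y1 \<omega>, Y0 \<omega>, X \<omega>)"
  let ?PR = "count_space UNIV \<Otimes>\<^sub>M count_space UNIV \<Otimes>\<^sub>M borel \<Otimes>\<^sub>M borel \<Otimes>\<^sub>M N"
  let ?ZA = "{Z -` A \<inter> space M | A. A \<in> sets (count_space UNIV)}"
  let ?GB = "{?V -` B \<inter> space M | B. B \<in> sets ?PR}"
  define G where "G = vimage_algebra (space M) ?V ?PR"
  note [measurable] = mZ mS1 mS0 mY1 mY0 mX
  have Vsp: "?V \<in> space M \<rightarrow> space ?PR"
    using measurable_space[OF mX] by (auto simp: space_pair_measure)
  have spG: "space G = space M" unfolding G_def by simp
  have setsG: "sets G = ?GB" unfolding G_def by (rule sets_vimage_algebra2[OF Vsp])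
  have VG: "?V \<in> measurable G ?PR" unfolding G_def by (rule measurable_vimage_algebra1[OF Vsp])
  have S1G[measurable]: "S1 \<in> measurable G (count_space UNIV)"
    using measurable_compose[OF VG measurable_fst] by simp
  have S0G[measurable]: "S0 \<in> measurable G (count_space UNIV)"
    using measurable_compose[OF measurable_compose[OF VG measurable_snd] measurable_fst] by simp
  have Y1G[measurable]: "Y1 \<in> borel_measurable G"
    using measurable_compose[OF measurable_compose[OF measurable_compose[OF VG measurable_snd] measurable_snd] measurable_fst] by simp
  have Y0G[measurable]: "Y0 \<in> borel_measurable G"
    using measurable_compose[OF measurable_compose[OF measurable_compose[OF measurable_compose[OF VG measurable_snd] measurable_snd] measurable_snd] measurable_fst] by simp
  have Xsp: "X \<in> space M \<rightarrow> space N" using measurable_space[OF mX] by auto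
  have setsF: "sets F = {X -` A \<inter> space M | A. A \<in> sets N}"
    unfolding F_def sigX_def by (rule sets_vimage_algebra2[OF Xsp])
  have spF: "space F = space M" unfolding F_def sigX_def by simp
  have subMF: "subalgebra M F"
    unfolding subalgebra_def setsF spF using measurable_sets[OF mX] by auto
  have subGF: "subalgebra G F"
    unfolding subalgebra_def setsF spF spG setsG
  proof (intro conjI subsetI refl)
    fix x assume "x \<in> {X -` A \<inter> space M |A. A \<in> sets N}"
    then obtain A where A: "A \<in> sets N" "x = X -` A \<inter> space M" by auto
    have "x = ?V -` (UNIV \<times> UNIV \<times> UNIV \<times> UNIV \<times> A) \<inter> space M" using A by auto
    moreover have "(UNIV \<times> UNIV \<times> UNIV \<times> UNIV \<times> A) \<in> sets ?PR"
      using A by (intro pair_measureI) auto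
    ultimately show "x \<in> ?GB" by blast
  qed
  interpret sfs: finite_measure_subalgebra M F
    by unfold_locales (rule subMF)
  have strG: "\<And>a b. stratum M S1 S0 a b \<in> sets G"
  proof -
    fix a b
    have "stratum M S1 S0 a b = {\<omega> \<in> space G. S1 \<omega> = a \<and> S0 \<omega> = b}"
      unfolding stratum_def spG ..
    also have "\<dots> \<in> sets G" by measurable
    finally show "stratum M S1 S0 a b \<in> sets G" .
  qed
  have strM[measurable]: "\<And>a b. stratum M S1 S0 a b \<in> sets M"
  proof -
    fix a b show "stratum M S1 S0 a b \<in> sets M" unfolding stratum_def by measurable
  qed
  have subMG: "subalgebra M G"
    unfolding subalgebra_def spG setsG using measurable_sets[of ?V M ?PR] by auto
  have ind: "indep_set ?ZA ?GB" using randomization .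
  define EZ1 where "EZ1 = {\<omega> \<in> space M. Z \<omega>}"
  define EZ0 where "EZ0 = {\<omega> \<in> space M. \<not> Z \<omega>}"
  have EZ1M[measurable]: "EZ1 \<in> sets M" unfolding EZ1_def by measurable
  have EZ0M[measurable]: "EZ0 \<in> sets M" unfolding EZ0_def by measurable
  have EZ1A: "\<And>C. (indicator EZ1 :: 'a \<Rightarrow> real) -` C \<inter> space M \<in> ?ZA"
  proof -
    fix C :: "real set"
    have "(indicator EZ1 :: 'a \<Rightarrow> real) -` C \<inter> space M = Z -` {b. (if b then 1 else 0) \<in> C} \<inter> space M"
      by (auto simp: indicator_def EZ1_def)
    then show "(indicator EZ1 :: 'a \<Rightarrow> real) -` C \<inter> space M \<in> ?ZA"
      by (intro CollectI exI[of _ "{b. (if b then 1 else 0) \<in> C}"] conjI) simp_all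
  qed
  have EZ0A: "\<And>C. (indicator EZ0 :: 'a \<Rightarrow> real) -` C \<inter> space M \<in> ?ZA"
  proof -
    fix C :: "real set"
    have "(indicator EZ0 :: 'a \<Rightarrow> real) -` C \<inter> space M = Z -` {b. (if b then 0 else 1) \<in> C} \<inter> space M"
      by (auto simp: indicator_def EZ0_def)
    then show "(indicator EZ0 :: 'a \<Rightarrow> real) -` C \<inter> space M \<in> ?ZA"
      by (intro CollectI exI[of _ "{b. (if b then 0 else 1) \<in> C}"] conjI) simp_all
  qed
  have fB: "\<And>C. C \<in> sets borel \<Longrightarrow> f -` C \<inter> space M \<in> ?GB" if "f \<in> borel_measurable G" for f :: "'a \<Rightarrow> real"
    using measurable_sets[OF that] unfolding spG setsG by blast
  have toM: "f \<in> borel_measurable M" if "f \<in> borel_measurable G" for f :: "'a \<Rightarrow> real"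
    using measurable_from_subalg[OF subMG that] .
  have escG[measurable]: "\<And>a b. escore M N X S1 S0 a b \<in> borel_measurable G"
    unfolding escore_def pscore_def F_def[symmetric]
    by (rule measurable_from_subalg[OF subGF]) simp
  have strGB: "\<And>a b c d. stratum M S1 S0 a b \<union> stratum M S1 S0 c d \<in> ?GB"
    using strG setsG by (metis sets.Un)
  have pr_un: "\<And>a b c d. (a, b) \<noteq> (c, d) \<Longrightarrow> prob (stratum M S1 S0 a b \<union> stratum M S1 S0 c d)
      = sprop M S1 S0 a b + sprop M S1 S0 c d"
    unfolding sprop_def by (rule finite_measure_Union) (auto simp: stratum_def)
  have nullAE: "AE \<omega> in M. \<omega> \<notin> ?sFT"
    using monotonicity by eventually_elim (auto simp: stratum_def)
  have null: "prob ?sFT = 0"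
  proof -
    have "emeasure M ?sFT = 0"
      using AE_iff_measurable[OF strM[of False True], of "\<lambda>\<omega>. \<omega> \<notin> ?sFT"] nullAE
      by (auto simp: stratum_def)
    then show ?thesis by (simp add: measure_def)
  qed
  note eps1' = eps1[unfolded condE_def pscore_def F_def[symmetric]]
  note eps0' = eps0[unfolded condE_def pscore_def F_def[symmetric]]
  note nz1' = nz_den1[unfolded condE_def pscore_def F_def[symmetric]]
  note nz0' = nz_den0[unfolded condE_def pscore_def F_def[symmetric]]
  note pos' = pos_ess pos_esn pos_enn pos_wden1 pos_wden0
  note pos'' = pos'[unfolded escore_def pscore_def F_def[symmetric]]
  have disj1: "?sTF \<inter> ?sTT = {}" by (auto simp: stratum_def)
  have disj0: "?sTF \<inter> ?sFF = {}" by (auto simp: stratum_def)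
  have T1: "cexp_ev M (\<lambda>\<omega>. w1_ssbar M N X S1 S0 \<epsilon>1 \<omega> * obsY Z Y1 Y0 \<omega>) {\<omega> \<in> space M. Z \<omega> \<and> obsS Z S1 S0 \<omega>}
      = (\<integral>\<omega>. Y1 \<omega> * indicator ?sTF \<omega> \<partial>M) / sprop M S1 S0 True False"
  proof -
    let ?w = "w1_ssbar M N X S1 S0 \<epsilon>1"
    let ?S = "?sTF \<union> ?sTT"
    let ?f = "\<lambda>\<omega>. ?w \<omega> * (Y1 \<omega> * indicator ?S \<omega>)"
    have fG: "?f \<in> borel_measurable G" unfolding w1_ssbar_def using strG by measurable
    have eqset: "{\<omega> \<in> space M. Z \<omega> \<and> obsS Z S1 S0 \<omega>} = EZ1 \<inter> ?S"
      by (auto simp: obsS_def stratum_def EZ1_def)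
    have eqfun: "\<And>\<omega>. ?w \<omega> * obsY Z Y1 Y0 \<omega> * indicator (EZ1 \<inter> ?S) \<omega> = ?f \<omega> * indicator EZ1 \<omega>"
      by (auto simp: indicator_def obsY_def stratum_def EZ1_def)
    have eqfun2: "(\<lambda>\<omega>. indicator (EZ1 \<inter> ?S) \<omega> * (?w \<omega> * obsY Z Y1 Y0 \<omega>)) = (\<lambda>\<omega>. ?f \<omega> * indicator EZ1 \<omega>)"
      by (auto simp: indicator_def obsY_def stratum_def EZ1_def fun_eq_iff)
    have SM: "EZ1 \<inter> ?S \<in> sets M" by measurable
    have int: "integrable M (\<lambda>\<omega>. ?f \<omega> * indicator EZ1 \<omega>)"
      using integrable_mult_indicator[OF SM int_w1sn] unfolding eqfun2[symmetric] by simp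
    have pos: "prob (EZ1 \<inter> ?S) > 0" using pos_E11 eqset by simp
    note R = obs_ratio[OF ind EZ1A fB[OF fG] EZ1M toM[OF fG] int strGB pos]
    have core: "(\<integral>\<omega>. ?f \<omega> \<partial>M) = (\<integral>\<omega>. Y1 \<omega> * indicator ?sTF \<omega> \<partial>M)
        / (sprop M S1 S0 True False / (sprop M S1 S0 True False + sprop M S1 S0 True True))"
      unfolding w1_ssbar_def escore_def pscore_def F_def[symmetric]
      by (rule sfs.weight_core[OF int_Y1 strM strM disj1 eps1' pos''(2) pos''(1) nz1' pos''(4) _
            R(1)[unfolded w1_ssbar_def escore_def pscore_def F_def[symmetric]]]) simp
    have "cexp_ev M (\<lambda>\<omega>. ?w \<omega> * obsY Z Y1 Y0 \<omega>) {\<omega> \<in> space M. Z \<omega> \<and> obsS Z S1 S0 \<omega>}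
        = (\<integral>\<omega>. ?f \<omega> * indicator EZ1 \<omega> \<partial>M) / prob (EZ1 \<inter> ?S)"
      unfolding cexp_ev_def eqset eqfun ..
    also have "\<dots> = (\<integral>\<omega>. ?f \<omega> \<partial>M) / prob ?S" by (rule R(2))
    also have "\<dots> = (\<integral>\<omega>. Y1 \<omega> * indicator ?sTF \<omega> \<partial>M) / sprop M S1 S0 True False"
      unfolding core pr_un[of True False True True, simplified] using pos_pi by (intro kdiv) auto
    finally show ?thesis .
  qed
  have T5: "cexp_ev M (\<lambda>\<omega>. w1_ss M N X S1 S0 \<epsilon>1 \<omega> * obsY Z Y1 Y0 \<omega>) {\<omega> \<in> space M. Z \<omega> \<and> obsS Z S1 S0 \<omega>}
      = (\<integral>\<omega>. Y1 \<omega> * indicator ?sTT \<omega> \<partial>M) / sprop M S1 S0 True True"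
  proof -
    let ?w = "w1_ss M N X S1 S0 \<epsilon>1"
    let ?S = "?sTF \<union> ?sTT"
    let ?f = "\<lambda>\<omega>. ?w \<omega> * (Y1 \<omega> * indicator ?S \<omega>)"
    have fG: "?f \<in> borel_measurable G" unfolding w1_ss_def using strG by measurable
    have eqset: "{\<omega> \<in> space M. Z \<omega> \<and> obsS Z S1 S0 \<omega>} = EZ1 \<inter> ?S"
      by (auto simp: obsS_def stratum_def EZ1_def)
    have eqfun: "\<And>\<omega>. ?w \<omega> * obsY Z Y1 Y0 \<omega> * indicator (EZ1 \<inter> ?S) \<omega> = ?f \<omega> * indicator EZ1 \<omega>"
      by (auto simp: indicator_def obsY_def stratum_def EZ1_def)
    have eqfun2: "(\<lambda>\<omega>. indicator (EZ1 \<inter> ?S) \<omega> * (?w \<omega> * obsY Z Y1 Y0 \<omega>)) = (\<lambda>\<omega>. ?f \<omega> * indicator EZ1 \<omega>)"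
      by (auto simp: indicator_def obsY_def stratum_def EZ1_def fun_eq_iff)
    have SM: "EZ1 \<inter> ?S \<in> sets M" by measurable
    have int: "integrable M (\<lambda>\<omega>. ?f \<omega> * indicator EZ1 \<omega>)"
      using integrable_mult_indicator[OF SM int_w1ss] unfolding eqfun2[symmetric] by simp
    have pos: "prob (EZ1 \<inter> ?S) > 0" using pos_E11 eqset by simp
    note R = obs_ratio[OF ind EZ1A fB[OF fG] EZ1M toM[OF fG] int strGB pos]
    have core: "(\<integral>\<omega>. ?f \<omega> \<partial>M) = (\<integral>\<omega>. Y1 \<omega> * indicator ?sTT \<omega> \<partial>M)
        / (sprop M S1 S0 True True / (sprop M S1 S0 True False + sprop M S1 S0 True True))"
      unfolding w1_ss_def escore_def pscore_def F_def[symmetric]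
      by (rule sfs.weight_core[OF int_Y1 strM strM disj1 eps1' pos''(2) pos''(1) nz1' pos''(4) _
            R(1)[unfolded w1_ss_def escore_def pscore_def F_def[symmetric]]]) simp
    have "cexp_ev M (\<lambda>\<omega>. ?w \<omega> * obsY Z Y1 Y0 \<omega>) {\<omega> \<in> space M. Z \<omega> \<and> obsS Z S1 S0 \<omega>}
        = (\<integral>\<omega>. ?f \<omega> * indicator EZ1 \<omega> \<partial>M) / prob (EZ1 \<inter> ?S)"
      unfolding cexp_ev_def eqset eqfun ..
    also have "\<dots> = (\<integral>\<omega>. ?f \<omega> \<partial>M) / prob ?S" by (rule R(2))
    also have "\<dots> = (\<integral>\<omega>. Y1 \<omega> * indicator ?sTT \<omega> \<partial>M) / sprop M S1 S0 True True"
      unfolding core pr_un[of True False True True, simplified] using pos_pi by (intro kdiv) auto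
    finally show ?thesis .
  qed
  have T2: "cexp_ev M (\<lambda>\<omega>. w0_ssbar M N X S1 S0 \<epsilon>0 \<omega> * obsY Z Y1 Y0 \<omega>) {\<omega> \<in> space M. \<not> Z \<omega> \<and> \<not> obsS Z S1 S0 \<omega>}
      = (\<integral>\<omega>. Y0 \<omega> * indicator ?sTF \<omega> \<partial>M) / sprop M S1 S0 True False"
  proof -
    let ?w = "w0_ssbar M N X S1 S0 \<epsilon>0"
    let ?S = "?sTF \<union> ?sFF"
    let ?f = "\<lambda>\<omega>. ?w \<omega> * (Y0 \<omega> * indicator ?S \<omega>)"
    have fG: "?f \<in> borel_measurable G" unfolding w0_ssbar_def using strG by measurable
    have eqset: "{\<omega> \<in> space M. \<not> Z \<omega> \<and> \<not> obsS Z S1 S0 \<omega>} = EZ0 \<inter> ?S"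
      by (auto simp: obsS_def stratum_def EZ0_def)
    have eqfun: "\<And>\<omega>. ?w \<omega> * obsY Z Y1 Y0 \<omega> * indicator (EZ0 \<inter> ?S) \<omega> = ?f \<omega> * indicator EZ0 \<omega>"
      by (auto simp: indicator_def obsY_def stratum_def EZ0_def)
    have eqfun2: "(\<lambda>\<omega>. indicator (EZ0 \<inter> ?S) \<omega> * (?w \<omega> * obsY Z Y1 Y0 \<omega>)) = (\<lambda>\<omega>. ?f \<omega> * indicator EZ0 \<omega>)"
      by (auto simp: indicator_def obsY_def stratum_def EZ0_def fun_eq_iff)
    have SM: "EZ0 \<inter> ?S \<in> sets M" by measurable
    have int: "integrable M (\<lambda>\<omega>. ?f \<omega> * indicator EZ0 \<omega>)"
      using integrable_mult_indicator[OF SM int_w0sn] unfolding eqfun2[symmetric] by simp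
    have pos: "prob (EZ0 \<inter> ?S) > 0" using pos_E00 eqset by simp
    note R = obs_ratio[OF ind EZ0A fB[OF fG] EZ0M toM[OF fG] int strGB pos]
    have core: "(\<integral>\<omega>. ?f \<omega> \<partial>M) = (\<integral>\<omega>. Y0 \<omega> * indicator ?sTF \<omega> \<partial>M)
        / (sprop M S1 S0 True False / (sprop M S1 S0 True False + sprop M S1 S0 False False))"
      unfolding w0_ssbar_def escore_def pscore_def F_def[symmetric]
      by (rule sfs.weight_core[OF int_Y0 strM strM disj0 eps0' pos''(2) pos''(3) nz0' pos''(5) _
            R(1)[unfolded w0_ssbar_def escore_def pscore_def F_def[symmetric]]]) simp
    have "cexp_ev M (\<lambda>\<omega>. ?w \<omega> * obsY Z Y1 Y0 \<omega>) {\<omega> \<in> space M. \<not> Z \<omega> \<and> \<not> obsS Z S1 S0 \<omega>}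
        = (\<integral>\<omega>. ?f \<omega> * indicator EZ0 \<omega> \<partial>M) / prob (EZ0 \<inter> ?S)"
      unfolding cexp_ev_def eqset eqfun ..
    also have "\<dots> = (\<integral>\<omega>. ?f \<omega> \<partial>M) / prob ?S" by (rule R(2))
    also have "\<dots> = (\<integral>\<omega>. Y0 \<omega> * indicator ?sTF \<omega> \<partial>M) / sprop M S1 S0 True False"
      unfolding core pr_un[of True False False False, simplified] using pos_pi by (intro kdiv) auto
    finally show ?thesis .
  qed
  have T4: "cexp_ev M (\<lambda>\<omega>. w0_sbarsbar M N X S1 S0 \<epsilon>0 \<omega> * obsY Z Y1 Y0 \<omega>) {\<omega> \<in> space M. \<not> Z \<omega> \<and> \<not> obsS Z S1 S0 \<omega>}
      = (\<integral>\<omega>. Y0 \<omega> * indicator ?sFF \<omega> \<partial>M) / sprop M S1 S0 False False"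
  proof -
    let ?w = "w0_sbarsbar M N X S1 S0 \<epsilon>0"
    let ?S = "?sTF \<union> ?sFF"
    let ?f = "\<lambda>\<omega>. ?w \<omega> * (Y0 \<omega> * indicator ?S \<omega>)"
    have fG: "?f \<in> borel_measurable G" unfolding w0_sbarsbar_def using strG by measurable
    have eqset: "{\<omega> \<in> space M. \<not> Z \<omega> \<and> \<not> obsS Z S1 S0 \<omega>} = EZ0 \<inter> ?S"
      by (auto simp: obsS_def stratum_def EZ0_def)
    have eqfun: "\<And>\<omega>. ?w \<omega> * obsY Z Y1 Y0 \<omega> * indicator (EZ0 \<inter> ?S) \<omega> = ?f \<omega> * indicator EZ0 \<omega>"
      by (auto simp: indicator_def obsY_def stratum_def EZ0_def)
    have eqfun2: "(\<lambda>\<omega>. indicator (EZ0 \<inter> ?S) \<omega> * (?w \<omega> * obsY Z Y1 Y0 \<omega>)) = (\<lambda>\<omega>. ?f \<omega> * indicator EZ0 \<omega>)"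
      by (auto simp: indicator_def obsY_def stratum_def EZ0_def fun_eq_iff)
    have SM: "EZ0 \<inter> ?S \<in> sets M" by measurable
    have int: "integrable M (\<lambda>\<omega>. ?f \<omega> * indicator EZ0 \<omega>)"
      using integrable_mult_indicator[OF SM int_w0nn] unfolding eqfun2[symmetric] by simp
    have pos: "prob (EZ0 \<inter> ?S) > 0" using pos_E00 eqset by simp
    note R = obs_ratio[OF ind EZ0A fB[OF fG] EZ0M toM[OF fG] int strGB pos]
    have core: "(\<integral>\<omega>. ?f \<omega> \<partial>M) = (\<integral>\<omega>. Y0 \<omega> * indicator ?sFF \<omega> \<partial>M)
        / (sprop M S1 S0 False False / (sprop M S1 S0 True False + sprop M S1 S0 False False))"
      unfolding w0_sbarsbar_def escore_def pscore_def F_def[symmetric]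
      by (rule sfs.weight_core[OF int_Y0 strM strM disj0 eps0' pos''(2) pos''(3) nz0' pos''(5) _
            R(1)[unfolded w0_sbarsbar_def escore_def pscore_def F_def[symmetric]]]) simp
    have "cexp_ev M (\<lambda>\<omega>. ?w \<omega> * obsY Z Y1 Y0 \<omega>) {\<omega> \<in> space M. \<not> Z \<omega> \<and> \<not> obsS Z S1 S0 \<omega>}
        = (\<integral>\<omega>. ?f \<omega> * indicator EZ0 \<omega> \<partial>M) / prob (EZ0 \<inter> ?S)"
      unfolding cexp_ev_def eqset eqfun ..
    also have "\<dots> = (\<integral>\<omega>. ?f \<omega> \<partial>M) / prob ?S" by (rule R(2))
    also have "\<dots> = (\<integral>\<omega>. Y0 \<omega> * indicator ?sFF \<omega> \<partial>M) / sprop M S1 S0 False False"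
      unfolding core pr_un[of True False False False, simplified] using pos_pi by (intro kdiv) auto
    finally show ?thesis .
  qed
  have T3: "cexp_ev M (obsY Z Y1 Y0) {\<omega> \<in> space M. Z \<omega> \<and> \<not> obsS Z S1 S0 \<omega>}
      = (\<integral>\<omega>. Y1 \<omega> * indicator ?sFF \<omega> \<partial>M) / sprop M S1 S0 False False"
  proof -
    let ?S = "?sFT \<union> ?sFF"
    let ?f = "\<lambda>\<omega>. Y1 \<omega> * indicator ?S \<omega>"
    have fG: "?f \<in> borel_measurable G" using strG by measurable
    have eqset: "{\<omega> \<in> space M. Z \<omega> \<and> \<not> obsS Z S1 S0 \<omega>} = EZ1 \<inter> ?S"
      by (auto simp: obsS_def stratum_def EZ1_def)
    have eqfun: "\<And>\<omega>. obsY Z Y1 Y0 \<omega> * indicator (EZ1 \<inter> ?S) \<omega> = ?f \<omega> * indicator EZ1 \<omega>"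
      by (auto simp: indicator_def obsY_def stratum_def EZ1_def)
    have eqfun2: "(\<lambda>\<omega>. indicator (EZ1 \<inter> ?S) \<omega> * Y1 \<omega>) = (\<lambda>\<omega>. ?f \<omega> * indicator EZ1 \<omega>)"
      by (auto simp: indicator_def stratum_def EZ1_def fun_eq_iff)
    have SM: "EZ1 \<inter> ?S \<in> sets M" by measurable
    have int: "integrable M (\<lambda>\<omega>. ?f \<omega> * indicator EZ1 \<omega>)"
      using integrable_mult_indicator[OF SM int_Y1] unfolding eqfun2[symmetric] by simp
    have pos: "prob (EZ1 \<inter> ?S) > 0" using pos_E10 eqset by simp
    note R = obs_ratio[OF ind EZ1A fB[OF fG] EZ1M toM[OF fG] int strGB pos]
    have core: "(\<integral>\<omega>. ?f \<omega> \<partial>M) = (\<integral>\<omega>. Y1 \<omega> * indicator ?sFF \<omega> \<partial>M)"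
      using nullAE by (intro integral_cong_AE) (auto simp: indicator_def)
    have pS: "prob ?S = sprop M S1 S0 False False"
      using pr_un[of False True False False] null by (simp add: sprop_def)
    have "cexp_ev M (obsY Z Y1 Y0) {\<omega> \<in> space M. Z \<omega> \<and> \<not> obsS Z S1 S0 \<omega>}
        = (\<integral>\<omega>. ?f \<omega> * indicator EZ1 \<omega> \<partial>M) / prob (EZ1 \<inter> ?S)"
      unfolding cexp_ev_def eqset eqfun ..
    also have "\<dots> = (\<integral>\<omega>. ?f \<omega> \<partial>M) / prob ?S" by (rule R(2))
    also have "\<dots> = (\<integral>\<omega>. Y1 \<omega> * indicator ?sFF \<omega> \<partial>M) / sprop M S1 S0 False False"
      unfolding core pS ..
    finally show ?thesis .
  qed
  have T6: "cexp_ev M (obsY Z Y1 Y0) {\<omega> \<in> space M. \<not> Z \<omega> \<and> obsS Z S1 S0 \<omega>}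
      = (\<integral>\<omega>. Y0 \<omega> * indicator ?sTT \<omega> \<partial>M) / sprop M S1 S0 True True"
  proof -
    let ?S = "?sTT \<union> ?sFT"
    let ?f = "\<lambda>\<omega>. Y0 \<omega> * indicator ?S \<omega>"
    have fG: "?f \<in> borel_measurable G" using strG by measurable
    have eqset: "{\<omega> \<in> space M. \<not> Z \<omega> \<and> obsS Z S1 S0 \<omega>} = EZ0 \<inter> ?S"
      by (auto simp: obsS_def stratum_def EZ0_def)
    have eqfun: "\<And>\<omega>. obsY Z Y1 Y0 \<omega> * indicator (EZ0 \<inter> ?S) \<omega> = ?f \<omega> * indicator EZ0 \<omega>"
      by (auto simp: indicator_def obsY_def stratum_def EZ0_def)
    have eqfun2: "(\<lambda>\<omega>. indicator (EZ0 \<inter> ?S) \<omega> * Y0 \<omega>) = (\<lambda>\<omega>. ?f \<omega> * indicator EZ0 \<omega>)"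
      by (auto simp: indicator_def stratum_def EZ0_def fun_eq_iff)
    have SM: "EZ0 \<inter> ?S \<in> sets M" by measurable
    have int: "integrable M (\<lambda>\<omega>. ?f \<omega> * indicator EZ0 \<omega>)"
      using integrable_mult_indicator[OF SM int_Y0] unfolding eqfun2[symmetric] by simp
    have pos: "prob (EZ0 \<inter> ?S) > 0" using pos_E01 eqset by simp
    note R = obs_ratio[OF ind EZ0A fB[OF fG] EZ0M toM[OF fG] int strGB pos]
    have core: "(\<integral>\<omega>. ?f \<omega> \<partial>M) = (\<integral>\<omega>. Y0 \<omega> * indicator ?sTT \<omega> \<partial>M)"
      using nullAE by (intro integral_cong_AE) (auto simp: indicator_def)
    have pS: "prob ?S = sprop M S1 S0 True True"
      using pr_un[of True True False True] null by (simp add: sprop_def)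
    have "cexp_ev M (obsY Z Y1 Y0) {\<omega> \<in> space M. \<not> Z \<omega> \<and> obsS Z S1 S0 \<omega>}
        = (\<integral>\<omega>. ?f \<omega> * indicator EZ0 \<omega> \<partial>M) / prob (EZ0 \<inter> ?S)"
      unfolding cexp_ev_def eqset eqfun ..
    also have "\<dots> = (\<integral>\<omega>. ?f \<omega> \<partial>M) / prob ?S" by (rule R(2))
    also have "\<dots> = (\<integral>\<omega>. Y0 \<omega> * indicator ?sTT \<omega> \<partial>M) / sprop M S1 S0 True True"
      unfolding core pS ..
    finally show ?thesis .
  qed
  have L: "\<And>a b. cexp_ev M (\<lambda>\<omega>. Y1 \<omega> - Y0 \<omega>) (stratum M S1 S0 a b)
      = ((\<integral>\<omega>. Y1 \<omega> * indicator (stratum M S1 S0 a b) \<omega> \<partial>M)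
         - (\<integral>\<omega>. Y0 \<omega> * indicator (stratum M S1 S0 a b) \<omega> \<partial>M)) / sprop M S1 S0 a b"
  proof -
    fix a b
    have i1: "integrable M (\<lambda>\<omega>. Y1 \<omega> * indicator (stratum M S1 S0 a b) \<omega>)"
      using integrable_mult_indicator[OF strM int_Y1] by (simp add: mult.commute)
    have i0: "integrable M (\<lambda>\<omega>. Y0 \<omega> * indicator (stratum M S1 S0 a b) \<omega>)"
      using integrable_mult_indicator[OF strM int_Y0] by (simp add: mult.commute)
    have "(\<lambda>\<omega>. (Y1 \<omega> - Y0 \<omega>) * indicator (stratum M S1 S0 a b) \<omega>)
        = (\<lambda>\<omega>. Y1 \<omega> * indicator (stratum M S1 S0 a b) \<omega> - Y0 \<omega> * indicator (stratum M S1 S0 a b) \<omega>)"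
      by (simp add: fun_eq_iff algebra_simps)
    then show "?thesis a b" unfolding cexp_ev_def sprop_def using Bochner_Integration.integral_diff[OF i1 i0] by simp
  qed
  show ?thesis unfolding L T1 T2 T3 T4 T5 T6 by (simp add: diff_divide_distrib)
qed

end
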